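(* Let $\mathcal{C}$ be a peircean bicategory, write $a;^\bullet b:=\neg(\neg a;\neg b)$ and $\mathrm{id}^\bullet_X:=\neg\,\mathrm{id}_X$. For every arrow $c:X\to Y$: (1) $c;(\neg c)^\dagger\le\mathrm{id}^\bullet_X$; (2) $\mathrm{id}_Y\le(\neg c)^\dagger;^\bullet c$; (3) $(\neg c)^\dagger;c\le\mathrm{id}^\bullet_Y$; (4) $\mathrm{id}_X\le c;^\bullet(\neg c)^\dagger$.
   Context: Composition $;$ in diagrammatic order. A cartesian bicategory is a poset-enriched symmetric monoidal category with, for each $X$, commutative comonoid $(\mathrm{copy}_X,\mathrm{disc}_X)$ and monoid $(\mathrm{cocopy}_X,\mathrm{codisc}_X)$ forming special Frobenius bimonoids, comonoid left adjoint to monoid, every arrow $c$ satisfying $c;\mathrm{copy}\le\mathrm{copy};(c\otimes c)$ and $c;\mathrm{disc}\le\mathrm{disc}$, with standard coherence. A map is an arrow $f$ with $f;\mathrm{copy}=\mathrm{copy};(f\otimes f)$ and $f;\mathrm{disc}=\mathrm{disc}$. A peircean bicategory is a cartesian bicategory whose homsets carry Boolean algebras (with the given order) such that $f;\neg c=\neg(f;c)$ for every map $f:X\to Y$ and arrow $c:Y\to Z$. The converse of $c:X\to Y$ is $c^\dagger=(\mathrm{id}_Y\otimes(\mathrm{codisc}_X;\mathrm{copy}_X));(\mathrm{id}_Y\otimes c\otimes\mathrm{id}_X);((\mathrm{cocopy}_Y;\mathrm{disc}_Y)\otimes\mathrm{id}_X):Y\to X$. *)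

theory Defs
  imports Main
begin

text \<open>Composition Comp is in diagrammatic order: Comp f g = f ; g.\<close>

record ('o, 'a) pbicat =
  Dom    :: "'a \<Rightarrow> 'o"
  Cod    :: "'a \<Rightarrow> 'o"
  Arr    :: "'a \<Rightarrow> bool"
  Id     :: "'o \<Rightarrow> 'a"
  Comp   :: "'a \<Rightarrow> 'a \<Rightarrow> 'a"
  TensO  :: "'o \<Rightarrow> 'o \<Rightarrow> 'o"
  TensA  :: "'a \<Rightarrow> 'a \<Rightarrow> 'a"
  Unit   :: "'o"
  Sym    :: "'o \<Rightarrow> 'o \<Rightarrow> 'a"
  Le     :: "'a \<Rightarrow> 'a \<Rightarrow> bool"
  Copy   :: "'o \<Rightarrow> 'a"
  Disc   :: "'o \<Rightarrow> 'a"
  Cocopy :: "'o \<Rightarrow> 'a"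
  Codisc :: "'o \<Rightarrow> 'a"
  Neg    :: "'a \<Rightarrow> 'a"
  Join   :: "'a \<Rightarrow> 'a \<Rightarrow> 'a"
  Meet   :: "'a \<Rightarrow> 'a \<Rightarrow> 'a"
  Top    :: "'o \<Rightarrow> 'o \<Rightarrow> 'a"
  Bot    :: "'o \<Rightarrow> 'o \<Rightarrow> 'a"

definition hom :: "('o, 'a, 'm) pbicat_scheme \<Rightarrow> 'o \<Rightarrow> 'o \<Rightarrow> 'a set" where
  "hom C X Y = {f. Arr C f \<and> Dom C f = X \<and> Cod C f = Y}"

locale category =
  fixes C :: "('o, 'a, 'm) pbicat_scheme"
  assumes id_hom: "Id C X \<in> hom C X X"
    and comp_hom: "\<lbrakk>f \<in> hom C X Y; g \<in> hom C Y Z\<rbrakk> \<Longrightarrow> Comp C f g \<in> hom C X Z"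
    and comp_assoc: "\<lbrakk>f \<in> hom C X Y; g \<in> hom C Y Z; h \<in> hom C Z W\<rbrakk>
        \<Longrightarrow> Comp C (Comp C f g) h = Comp C f (Comp C g h)"
    and id_left: "f \<in> hom C X Y \<Longrightarrow> Comp C (Id C X) f = f"
    and id_right: "f \<in> hom C X Y \<Longrightarrow> Comp C f (Id C Y) = f"

locale strict_symmetric_monoidal = category C
  for C :: "('o, 'a, 'm) pbicat_scheme" +
  assumes tens_hom: "\<lbrakk>f \<in> hom C X Y; g \<in> hom C X' Y'\<rbrakk>
        \<Longrightarrow> TensA C f g \<in> hom C (TensO C X X') (TensO C Y Y')"
    and tens_id: "TensA C (Id C X) (Id C Y) = Id C (TensO C X Y)"
    and interchange: "\<lbrakk>f \<in> hom C X Y; g \<in> hom C Y Z; f' \<in> hom C X' Y'; g' \<in> hom C Y' Z'\<rbrakk>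
        \<Longrightarrow> TensA C (Comp C f g) (Comp C f' g') = Comp C (TensA C f f') (TensA C g g')"
    and tensO_assoc: "TensO C (TensO C X Y) Z = TensO C X (TensO C Y Z)"
    and tensO_unit_left: "TensO C (Unit C) X = X"
    and tensO_unit_right: "TensO C X (Unit C) = X"
    and tensA_assoc: "\<lbrakk>Arr C f; Arr C g; Arr C h\<rbrakk>
        \<Longrightarrow> TensA C (TensA C f g) h = TensA C f (TensA C g h)"
    and tensA_unit_left: "Arr C f \<Longrightarrow> TensA C (Id C (Unit C)) f = f"
    and tensA_unit_right: "Arr C f \<Longrightarrow> TensA C f (Id C (Unit C)) = f"
    and sym_hom: "Sym C X Y \<in> hom C (TensO C X Y) (TensO C Y X)"
    and sym_natural: "\<lbrakk>f \<in> hom C X X'; g \<in> hom C Y Y'\<rbrakk>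
        \<Longrightarrow> Comp C (TensA C f g) (Sym C X' Y') = Comp C (Sym C X Y) (TensA C g f)"
    and sym_inverse: "Comp C (Sym C X Y) (Sym C Y X) = Id C (TensO C X Y)"
    and sym_hexagon: "Sym C X (TensO C Y Z)
        = Comp C (TensA C (Sym C X Y) (Id C Z)) (TensA C (Id C Y) (Sym C X Z))"

locale poset_enriched_ssm = strict_symmetric_monoidal C
  for C :: "('o, 'a, 'm) pbicat_scheme" +
  assumes le_parallel: "Le C f g \<Longrightarrow> Arr C f \<and> Arr C g \<and> Dom C f = Dom C g \<and> Cod C f = Cod C g"
    and le_refl: "Arr C f \<Longrightarrow> Le C f f"
    and le_trans: "\<lbrakk>Le C f g; Le C g h\<rbrakk> \<Longrightarrow> Le C f h"
    and le_antisym: "\<lbrakk>Le C f g; Le C g f\<rbrakk> \<Longrightarrow> f = g"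
    and comp_mono: "\<lbrakk>Le C f f'; Le C g g'; Cod C f = Dom C g\<rbrakk>
        \<Longrightarrow> Le C (Comp C f g) (Comp C f' g')"
    and tens_mono: "\<lbrakk>Le C f f'; Le C g g'\<rbrakk> \<Longrightarrow> Le C (TensA C f g) (TensA C f' g')"

locale cartesian_bicategory = poset_enriched_ssm C
  for C :: "('o, 'a, 'm) pbicat_scheme" +
  assumes copy_hom: "Copy C X \<in> hom C X (TensO C X X)"
    and disc_hom: "Disc C X \<in> hom C X (Unit C)"
    and cocopy_hom: "Cocopy C X \<in> hom C (TensO C X X) X"
    and codisc_hom: "Codisc C X \<in> hom C (Unit C) X"
    and copy_assoc: "Comp C (Copy C X) (TensA C (Copy C X) (Id C X))
        = Comp C (Copy C X) (TensA C (Id C X) (Copy C X))"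
    and copy_unit: "Comp C (Copy C X) (TensA C (Disc C X) (Id C X)) = Id C X"
    and copy_comm: "Comp C (Copy C X) (Sym C X X) = Copy C X"
    and cocopy_assoc: "Comp C (TensA C (Cocopy C X) (Id C X)) (Cocopy C X)
        = Comp C (TensA C (Id C X) (Cocopy C X)) (Cocopy C X)"
    and cocopy_unit: "Comp C (TensA C (Codisc C X) (Id C X)) (Cocopy C X) = Id C X"
    and cocopy_comm: "Comp C (Sym C X X) (Cocopy C X) = Cocopy C X"
    and frobenius1: "Comp C (TensA C (Copy C X) (Id C X)) (TensA C (Id C X) (Cocopy C X))
        = Comp C (Cocopy C X) (Copy C X)"
    and frobenius2: "Comp C (TensA C (Id C X) (Copy C X)) (TensA C (Cocopy C X) (Id C X))
        = Comp C (Cocopy C X) (Copy C X)"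
    and special: "Comp C (Copy C X) (Cocopy C X) = Id C X"
    and copy_adj_unit: "Le C (Id C X) (Comp C (Copy C X) (Cocopy C X))"
    and copy_adj_counit: "Le C (Comp C (Cocopy C X) (Copy C X)) (Id C (TensO C X X))"
    and disc_adj_unit: "Le C (Id C X) (Comp C (Disc C X) (Codisc C X))"
    and disc_adj_counit: "Le C (Comp C (Codisc C X) (Disc C X)) (Id C (Unit C))"
    and lax_copy: "c \<in> hom C X Y \<Longrightarrow>
        Le C (Comp C c (Copy C Y)) (Comp C (Copy C X) (TensA C c c))"
    and lax_disc: "c \<in> hom C X Y \<Longrightarrow> Le C (Comp C c (Disc C Y)) (Disc C X)"
    and copy_tens: "Copy C (TensO C X Y) = Comp C (TensA C (Copy C X) (Copy C Y))
        (TensA C (TensA C (Id C X) (Sym C X Y)) (Id C Y))"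
    and disc_tens: "Disc C (TensO C X Y) = TensA C (Disc C X) (Disc C Y)"
    and copy_unit_obj: "Copy C (Unit C) = Id C (Unit C)"
    and disc_unit_obj: "Disc C (Unit C) = Id C (Unit C)"
    and cocopy_tens: "Cocopy C (TensO C X Y) =
        Comp C (TensA C (TensA C (Id C X) (Sym C Y X)) (Id C Y)) (TensA C (Cocopy C X) (Cocopy C Y))"
    and codisc_tens: "Codisc C (TensO C X Y) = TensA C (Codisc C X) (Codisc C Y)"
    and cocopy_unit_obj: "Cocopy C (Unit C) = Id C (Unit C)"
    and codisc_unit_obj: "Codisc C (Unit C) = Id C (Unit C)"

definition is_map :: "('o, 'a, 'm) pbicat_scheme \<Rightarrow> 'a \<Rightarrow> bool" where
  "is_map C f \<longleftrightarrow> Arr C f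
     \<and> Comp C f (Copy C (Cod C f)) = Comp C (Copy C (Dom C f)) (TensA C f f)
     \<and> Comp C f (Disc C (Cod C f)) = Disc C (Dom C f)"

locale peircean_bicategory = cartesian_bicategory C
  for C :: "('o, 'a, 'm) pbicat_scheme" +
  assumes neg_hom: "f \<in> hom C X Y \<Longrightarrow> Neg C f \<in> hom C X Y"
    and join_hom: "\<lbrakk>f \<in> hom C X Y; g \<in> hom C X Y\<rbrakk> \<Longrightarrow> Join C f g \<in> hom C X Y"
    and meet_hom: "\<lbrakk>f \<in> hom C X Y; g \<in> hom C X Y\<rbrakk> \<Longrightarrow> Meet C f g \<in> hom C X Y"
    and top_hom: "Top C X Y \<in> hom C X Y"
    and bot_hom: "Bot C X Y \<in> hom C X Y"
    and join_lub: "\<lbrakk>f \<in> hom C X Y; g \<in> hom C X Y; h \<in> hom C X Y\<rbrakk>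
        \<Longrightarrow> Le C (Join C f g) h \<longleftrightarrow> Le C f h \<and> Le C g h"
    and meet_glb: "\<lbrakk>f \<in> hom C X Y; g \<in> hom C X Y; h \<in> hom C X Y\<rbrakk>
        \<Longrightarrow> Le C h (Meet C f g) \<longleftrightarrow> Le C h f \<and> Le C h g"
    and top_greatest: "f \<in> hom C X Y \<Longrightarrow> Le C f (Top C X Y)"
    and bot_least: "f \<in> hom C X Y \<Longrightarrow> Le C (Bot C X Y) f"
    and distrib: "\<lbrakk>f \<in> hom C X Y; g \<in> hom C X Y; h \<in> hom C X Y\<rbrakk>
        \<Longrightarrow> Meet C f (Join C g h) = Join C (Meet C f g) (Meet C f h)"
    and neg_meet: "f \<in> hom C X Y \<Longrightarrow> Meet C f (Neg C f) = Bot C X Y"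
    and neg_join: "f \<in> hom C X Y \<Longrightarrow> Join C f (Neg C f) = Top C X Y"
    and map_neg: "\<lbrakk>is_map C f; f \<in> hom C X Y; c \<in> hom C Y Z\<rbrakk>
        \<Longrightarrow> Comp C f (Neg C c) = Neg C (Comp C f c)"

definition conv :: "('o, 'a, 'm) pbicat_scheme \<Rightarrow> 'a \<Rightarrow> 'a" where
  "conv C c = (let X = Dom C c; Y = Cod C c in
     Comp C (Comp C (TensA C (Id C Y) (Comp C (Codisc C X) (Copy C X)))
                    (TensA C (TensA C (Id C Y) c) (Id C X)))
            (TensA C (Comp C (Cocopy C Y) (Disc C Y)) (Id C X)))"

definition bcomp :: "('o, 'a, 'm) pbicat_scheme \<Rightarrow> 'a \<Rightarrow> 'a \<Rightarrow> 'a" where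
  "bcomp C a b = Neg C (Comp C (Neg C a) (Neg C b))"

definition bid :: "('o, 'a, 'm) pbicat_scheme \<Rightarrow> 'o \<Rightarrow> 'a" where
  "bid C X = Neg C (Id C X)"

end

theory Submission
  imports Defs
begin

context category begin
lemma arr_id[simp]: "Arr C (Id C X)" and dom_id[simp]: "Dom C (Id C X) = X" and cod_id[simp]: "Cod C (Id C X) = X"
  using id_hom[of X] by (auto simp: hom_def)
lemma arr_comp[simp]: "\<lbrakk>Arr C f; Arr C g; Cod C f = Dom C g\<rbrakk> \<Longrightarrow> Arr C (Comp C f g)"
  and dom_comp[simp]: "\<lbrakk>Arr C f; Arr C g; Cod C f = Dom C g\<rbrakk> \<Longrightarrow> Dom C (Comp C f g) = Dom C f"
  and cod_comp[simp]: "\<lbrakk>Arr C f; Arr C g; Cod C f = Dom C g\<rbrakk> \<Longrightarrow> Cod C (Comp C f g) = Cod C g"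
  using comp_hom[of f "Dom C f" "Cod C f" g "Cod C g"] by (auto simp: hom_def)
lemma idl[simp]: "\<lbrakk>Arr C f; Dom C f = X\<rbrakk> \<Longrightarrow> Comp C (Id C X) f = f"
  using id_left[of f X "Cod C f"] by (auto simp: hom_def)
lemma idr[simp]: "\<lbrakk>Arr C f; Cod C f = X\<rbrakk> \<Longrightarrow> Comp C f (Id C X) = f"
  using id_right[of f "Dom C f" X] by (auto simp: hom_def)
lemma assoc: "\<lbrakk>Arr C f; Arr C g; Arr C h; Cod C f = Dom C g; Cod C g = Dom C h\<rbrakk>
   \<Longrightarrow> Comp C (Comp C f g) h = Comp C f (Comp C g h)"
  using comp_assoc[of f "Dom C f" "Cod C f" g "Cod C g" h "Cod C h"] by (auto simp: hom_def)
end

context strict_symmetric_monoidal begin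
declare tensO_assoc[simp] tensO_unit_left[simp] tensO_unit_right[simp]
lemma arr_tens[simp]: "\<lbrakk>Arr C f; Arr C g\<rbrakk> \<Longrightarrow> Arr C (TensA C f g)"
  and dom_tens[simp]: "\<lbrakk>Arr C f; Arr C g\<rbrakk> \<Longrightarrow> Dom C (TensA C f g) = TensO C (Dom C f) (Dom C g)"
  and cod_tens[simp]: "\<lbrakk>Arr C f; Arr C g\<rbrakk> \<Longrightarrow> Cod C (TensA C f g) = TensO C (Cod C f) (Cod C g)"
  using tens_hom[of f "Dom C f" "Cod C f" g "Dom C g" "Cod C g"] by (auto simp: hom_def)
lemma arr_sym[simp]: "Arr C (Sym C X Y)" and dom_sym[simp]: "Dom C (Sym C X Y) = TensO C X Y"
  and cod_sym[simp]: "Cod C (Sym C X Y) = TensO C Y X"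
  using sym_hom[of X Y] by (auto simp: hom_def)
lemma tunitl[simp]: "Arr C f \<Longrightarrow> TensA C (Id C (Unit C)) f = f" by (rule tensA_unit_left)
lemma tunitr[simp]: "Arr C f \<Longrightarrow> TensA C f (Id C (Unit C)) = f" by (rule tensA_unit_right)
lemma tassoc: "\<lbrakk>Arr C f; Arr C g; Arr C h\<rbrakk> \<Longrightarrow> TensA C (TensA C f g) h = TensA C f (TensA C g h)"
  by (rule tensA_assoc)
lemma ic: "\<lbrakk>Arr C f; Arr C g; Arr C f'; Arr C g'; Cod C f = Dom C g; Cod C f' = Dom C g'\<rbrakk>
  \<Longrightarrow> TensA C (Comp C f g) (Comp C f' g') = Comp C (TensA C f f') (TensA C g g')"
  using interchange[of f "Dom C f" "Cod C f" g "Cod C g" f' "Dom C f'" "Cod C f'" g' "Cod C g'"]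
  by (auto simp: hom_def)
lemma slide1: "\<lbrakk>Arr C f; Arr C g\<rbrakk> \<Longrightarrow> TensA C f g = Comp C (TensA C f (Id C (Dom C g))) (TensA C (Id C (Cod C f)) g)"
  using ic[of f "Id C (Cod C f)" "Id C (Dom C g)" g] by simp
lemma slide2: "\<lbrakk>Arr C f; Arr C g\<rbrakk> \<Longrightarrow> TensA C f g = Comp C (TensA C (Id C (Dom C f)) g) (TensA C f (Id C (Cod C g)))"
  using ic[of "Id C (Dom C f)" f g "Id C (Cod C g)"] by simp
lemma sym_nat: "\<lbrakk>Arr C f; Arr C g\<rbrakk> \<Longrightarrow> Comp C (TensA C f g) (Sym C (Cod C f) (Cod C g)) = Comp C (Sym C (Dom C f) (Dom C g)) (TensA C g f)"
  using sym_natural[of f "Dom C f" "Cod C f" g "Dom C g" "Cod C g"] by (auto simp: hom_def)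
lemma symXI[simp]: "Sym C X (Unit C) = Id C X"
proof -
  have h: "Sym C X (Unit C) = Comp C (Sym C X (Unit C)) (Sym C X (Unit C))"
    using sym_hexagon[of X "Unit C" "Unit C"] by simp
  have i: "Comp C (Sym C X (Unit C)) (Sym C (Unit C) X) = Id C X" using sym_inverse[of X "Unit C"] by simp
  have "Sym C X (Unit C) = Comp C (Sym C X (Unit C)) (Comp C (Sym C X (Unit C)) (Sym C (Unit C) X))"
    using i by simp
  also have "\<dots> = Comp C (Comp C (Sym C X (Unit C)) (Sym C X (Unit C))) (Sym C (Unit C) X)"
    by (simp add: assoc)
  also have "\<dots> = Id C X" using h i by simp
  finally show ?thesis .
qed
lemma symIX[simp]: "Sym C (Unit C) X = Id C X"
  using sym_inverse[of "Unit C" X] by simp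
end

context category begin
lemma kv: "\<lbrakk>Comp C f g = h; Arr C f; Arr C g; Arr C k; Cod C f = Dom C g; Cod C g = Dom C k\<rbrakk>
  \<Longrightarrow> Comp C f (Comp C g k) = Comp C h k"
  using assoc[of f g k] by simp
end

context cartesian_bicategory begin
lemma arr_copy[simp]: "Arr C (Copy C X)" and dom_copy[simp]: "Dom C (Copy C X) = X"
  and cod_copy[simp]: "Cod C (Copy C X) = TensO C X X"
  using copy_hom[of X] by (auto simp: hom_def)
lemma arr_cocopy[simp]: "Arr C (Cocopy C X)" and dom_cocopy[simp]: "Dom C (Cocopy C X) = TensO C X X"
  and cod_cocopy[simp]: "Cod C (Cocopy C X) = X"
  using cocopy_hom[of X] by (auto simp: hom_def)
lemma arr_disc[simp]: "Arr C (Disc C X)" and dom_disc[simp]: "Dom C (Disc C X) = X"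
  and cod_disc[simp]: "Cod C (Disc C X) = Unit C"
  using disc_hom[of X] by (auto simp: hom_def)
lemma arr_codisc[simp]: "Arr C (Codisc C X)" and dom_codisc[simp]: "Dom C (Codisc C X) = Unit C"
  and cod_codisc[simp]: "Cod C (Codisc C X) = X"
  using codisc_hom[of X] by (auto simp: hom_def)

lemma copy_disc_l: "Comp C (Copy C X) (TensA C (Disc C X) (Id C X)) = Id C X" by (rule copy_unit)
lemma copy_disc_r: "Comp C (Copy C X) (TensA C (Id C X) (Disc C X)) = Id C X"
proof -
  have "TensA C (Id C X) (Disc C X) = Comp C (Sym C X X) (TensA C (Disc C X) (Id C X))"
    using sym_nat[of "Id C X" "Disc C X"] by simp
  hence "Comp C (Copy C X) (TensA C (Id C X) (Disc C X)) = Comp C (Comp C (Copy C X) (Sym C X X)) (TensA C (Disc C X) (Id C X))"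
    by (simp add: assoc)
  thus ?thesis by (simp add: copy_comm copy_unit)
qed
lemma codisc_l: "Comp C (TensA C (Codisc C X) (Id C X)) (Cocopy C X) = Id C X" by (rule cocopy_unit)
lemma codisc_r: "Comp C (TensA C (Id C X) (Codisc C X)) (Cocopy C X) = Id C X"
proof -
  have "Comp C (TensA C (Id C X) (Codisc C X)) (Sym C X X) = TensA C (Codisc C X) (Id C X)"
    using sym_nat[of "Id C X" "Codisc C X"] by simp
  hence "Comp C (TensA C (Id C X) (Codisc C X)) (Cocopy C X) = Comp C (TensA C (Codisc C X) (Id C X)) (Cocopy C X)"
    by (metis assoc cocopy_comm arr_tens arr_id arr_codisc arr_sym arr_cocopy cod_tens cod_id cod_codisc dom_sym dom_cocopy cod_sym)
  thus ?thesis by (simp add: cocopy_unit)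
qed

abbreviation cap where "cap X \<equiv> Comp C (Codisc C X) (Copy C X)"
abbreviation cup where "cup X \<equiv> Comp C (Cocopy C X) (Disc C X)"

lemma snake1: "Comp C (TensA C (Id C Y) (cap Y)) (TensA C (cup Y) (Id C Y)) = Id C Y"
proof -
  have a: "TensA C (Id C Y) (cap Y) = Comp C (TensA C (Id C Y) (Codisc C Y)) (TensA C (Id C Y) (Copy C Y))"
    using ic[of "Id C Y" "Id C Y" "Codisc C Y" "Copy C Y"] by simp
  have b: "TensA C (cup Y) (Id C Y) = Comp C (TensA C (Cocopy C Y) (Id C Y)) (TensA C (Disc C Y) (Id C Y))"
    using ic[of "Cocopy C Y" "Disc C Y" "Id C Y" "Id C Y"] by simp
  have f: "Comp C (TensA C (Id C Y) (Copy C Y)) (Comp C (TensA C (Cocopy C Y) (Id C Y)) (TensA C (Disc C Y) (Id C Y)))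
     = Comp C (Comp C (Cocopy C Y) (Copy C Y)) (TensA C (Disc C Y) (Id C Y))"
    by (rule kv[OF frobenius2]) auto
  show ?thesis unfolding a b using f
    by (simp add: assoc copy_unit codisc_r)
qed
lemma snake2: "Comp C (TensA C (cap Y) (Id C Y)) (TensA C (Id C Y) (cup Y)) = Id C Y"
proof -
  have a: "TensA C (cap Y) (Id C Y) = Comp C (TensA C (Codisc C Y) (Id C Y)) (TensA C (Copy C Y) (Id C Y))"
    using ic[of "Codisc C Y" "Copy C Y" "Id C Y" "Id C Y"] by simp
  have b: "TensA C (Id C Y) (cup Y) = Comp C (TensA C (Id C Y) (Cocopy C Y)) (TensA C (Id C Y) (Disc C Y))"
    using ic[of "Id C Y" "Id C Y" "Cocopy C Y" "Disc C Y"] by simp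
  have f: "Comp C (TensA C (Copy C Y) (Id C Y)) (Comp C (TensA C (Id C Y) (Cocopy C Y)) (TensA C (Id C Y) (Disc C Y)))
     = Comp C (Comp C (Cocopy C Y) (Copy C Y)) (TensA C (Id C Y) (Disc C Y))"
    by (rule kv[OF frobenius1]) auto
  show ?thesis unfolding a b using f
    by (simp add: assoc copy_disc_r codisc_l)
qed

declare tens_id[simp]

definition bend where "bend f = Comp C (TensA C f (Id C (Cod C f))) (cup (Cod C f))"
definition unbend where "unbend X Y g = Comp C (TensA C (Id C X) (cap Y)) (TensA C g (Id C Y))"

lemma bend_ty[simp]: "Arr C f \<Longrightarrow> Arr C (bend f)" "Arr C f \<Longrightarrow> Dom C (bend f) = TensO C (Dom C f) (Cod C f)"
  "Arr C f \<Longrightarrow> Cod C (bend f) = Unit C"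
  by (simp_all add: bend_def)
lemma unbend_ty[simp]: "\<lbrakk>Arr C g; Dom C g = TensO C X Y; Cod C g = Unit C\<rbrakk> \<Longrightarrow> Arr C (unbend X Y g)"
  "\<lbrakk>Arr C g; Dom C g = TensO C X Y; Cod C g = Unit C\<rbrakk> \<Longrightarrow> Dom C (unbend X Y g) = X"
  "\<lbrakk>Arr C g; Dom C g = TensO C X Y; Cod C g = Unit C\<rbrakk> \<Longrightarrow> Cod C (unbend X Y g) = Y"
  by (simp_all add: unbend_def)

lemma unbend_bend: assumes f: "Arr C f" "Dom C f = X" "Cod C f = Y"
  shows "unbend X Y (bend f) = f"
proof -
  have e1: "TensA C (Comp C (TensA C f (Id C Y)) (cup Y)) (Id C Y) = Comp C (TensA C f (Id C (TensO C Y Y))) (TensA C (cup Y) (Id C Y))"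
    using ic[of "TensA C f (Id C Y)" "cup Y" "Id C Y" "Id C Y"] f by (simp add: tassoc)
  have e2: "Comp C (TensA C (Id C X) (cap Y)) (TensA C f (Id C (TensO C Y Y))) = Comp C f (TensA C (Id C Y) (cap Y))"
    using ic[of "Id C X" f "cap Y" "Id C (TensO C Y Y)"] ic[of f "Id C Y" "Id C (Unit C)" "cap Y"] f by simp
  have "unbend X Y (bend f) = Comp C (TensA C (Id C X) (cap Y)) (Comp C (TensA C f (Id C (TensO C Y Y))) (TensA C (cup Y) (Id C Y)))"
    unfolding unbend_def bend_def using f e1 by simp
  also have "\<dots> = Comp C (Comp C f (TensA C (Id C Y) (cap Y))) (TensA C (cup Y) (Id C Y))"
    using f e2 by (simp flip: assoc)
  also have "\<dots> = f" using f by (simp add: assoc snake1)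
  finally show ?thesis .
qed
lemma bend_unbend: assumes g: "Arr C g" "Dom C g = TensO C X Y" "Cod C g = Unit C"
  shows "bend (unbend X Y g) = g"
proof -
  let ?u = "unbend X Y g"
  have e1: "TensA C ?u (Id C Y) = Comp C (TensA C (Id C X) (TensA C (cap Y) (Id C Y))) (TensA C g (Id C (TensO C Y Y)))"
    using ic[of "TensA C (Id C X) (cap Y)" "TensA C g (Id C Y)" "Id C Y" "Id C Y"] g
    by (simp add: unbend_def tassoc)
  have e2: "Comp C (TensA C g (Id C (TensO C Y Y))) (cup Y) = Comp C (TensA C (Id C (TensO C X Y)) (cup Y)) g"
    using ic[of g "Id C (Unit C)" "Id C (TensO C Y Y)" "cup Y"] ic[of "Id C (TensO C X Y)" g "cup Y" "Id C (Unit C)"] g by simp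
  have e3: "TensA C (Id C (TensO C X Y)) (cup Y) = TensA C (Id C X) (TensA C (Id C Y) (cup Y))"
    using tens_id[of X Y] tassoc[of "Id C X" "Id C Y" "cup Y"] by simp
  have e4: "Comp C (TensA C (Id C X) (TensA C (cap Y) (Id C Y))) (TensA C (Id C X) (TensA C (Id C Y) (cup Y))) = Id C (TensO C X Y)"
    using ic[of "Id C X" "Id C X" "TensA C (cap Y) (Id C Y)" "TensA C (Id C Y) (cup Y)"] snake2[of Y] by simp
  have "bend ?u = Comp C (Comp C (TensA C (Id C X) (TensA C (cap Y) (Id C Y))) (TensA C g (Id C (TensO C Y Y)))) (cup Y)"
    unfolding bend_def using g e1 by simp
  also have "\<dots> = Comp C (TensA C (Id C X) (TensA C (cap Y) (Id C Y))) (Comp C (TensA C (Id C X) (TensA C (Id C Y) (cup Y))) g)"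
    using g e2 e3 by (simp add: assoc)
  also have "\<dots> = g" using g e4 by (simp flip: assoc)
  finally show ?thesis .
qed
end


context peircean_bicategory begin

lemma le_par: "Le C f g \<Longrightarrow> Arr C f \<and> Arr C g \<and> Dom C f = Dom C g \<and> Cod C f = Cod C g"
  by (rule le_parallel)
lemma le_hom: "Le C f g \<Longrightarrow> f \<in> hom C X Y \<Longrightarrow> g \<in> hom C X Y"
  using le_parallel[of f g] by (auto simp: hom_def)
lemma le_hom': "Le C f g \<Longrightarrow> g \<in> hom C X Y \<Longrightarrow> f \<in> hom C X Y"
  using le_parallel[of f g] by (auto simp: hom_def)
lemma le_refl': "f \<in> hom C X Y \<Longrightarrow> Le C f f" using le_refl by (auto simp: hom_def)

lemma meet_le1: "\<lbrakk>a \<in> hom C X Y; b \<in> hom C X Y\<rbrakk> \<Longrightarrow> Le C (Meet C a b) a"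
  using meet_glb[of a X Y b "Meet C a b"] meet_hom[of a X Y b] le_refl' by blast
lemma meet_le2: "\<lbrakk>a \<in> hom C X Y; b \<in> hom C X Y\<rbrakk> \<Longrightarrow> Le C (Meet C a b) b"
  using meet_glb[of a X Y b "Meet C a b"] meet_hom[of a X Y b] le_refl' by blast
lemma join_ge1: "\<lbrakk>a \<in> hom C X Y; b \<in> hom C X Y\<rbrakk> \<Longrightarrow> Le C a (Join C a b)"
  using join_lub[of a X Y b "Join C a b"] join_hom[of a X Y b] le_refl' by blast
lemma join_ge2: "\<lbrakk>a \<in> hom C X Y; b \<in> hom C X Y\<rbrakk> \<Longrightarrow> Le C b (Join C a b)"
  using join_lub[of a X Y b "Join C a b"] join_hom[of a X Y b] le_refl' by blast

lemma bot_char: "k \<in> hom C X Y \<Longrightarrow> Le C k (Bot C X Y) \<longleftrightarrow> (\<forall>m\<in>hom C X Y. Le C k m)"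
  using bot_least bot_hom le_trans by blast

lemma neg_char: assumes a: "a \<in> hom C X Y" and h: "h \<in> hom C X Y"
  shows "Le C h (Neg C a) \<longleftrightarrow> (\<forall>k\<in>hom C X Y. Le C k h \<longrightarrow> Le C k a \<longrightarrow> Le C k (Bot C X Y))"
proof
  assume "Le C h (Neg C a)"
  thus "\<forall>k\<in>hom C X Y. Le C k h \<longrightarrow> Le C k a \<longrightarrow> Le C k (Bot C X Y)"
    using meet_glb[of a X Y "Neg C a"] neg_meet[OF a] neg_hom[OF a] a le_trans by metis
next
  assume H: "\<forall>k\<in>hom C X Y. Le C k h \<longrightarrow> Le C k a \<longrightarrow> Le C k (Bot C X Y)"
  have na: "Neg C a \<in> hom C X Y" using neg_hom[OF a] .
  have mh: "Meet C h a \<in> hom C X Y" using meet_hom[OF h a] .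
  have m1: "Le C (Meet C h a) (Bot C X Y)" using H mh meet_le1[OF h a] meet_le2[OF h a] by blast
  have m2: "Le C (Meet C h a) (Neg C a)" using m1 bot_least[OF na] le_trans by blast
  have m3: "Le C (Meet C h (Neg C a)) (Neg C a)" using meet_le2[OF h na] .
  have j: "Le C (Join C (Meet C h a) (Meet C h (Neg C a))) (Neg C a)"
    using join_lub[OF mh meet_hom[OF h na] na] m2 m3 by blast
  have t: "Le C h (Meet C h (Top C X Y))"
    using meet_glb[OF h top_hom h] le_refl'[OF h] top_greatest[OF h] by blast
  have "Meet C h (Top C X Y) = Join C (Meet C h a) (Meet C h (Neg C a))"
    using neg_join[OF a] distrib[OF h a na] by simp
  thus "Le C h (Neg C a)" using t j le_trans by metis
qed

lemma neg_flip: "\<lbrakk>a \<in> hom C X Y; b \<in> hom C X Y\<rbrakk> \<Longrightarrow> Le C a (Neg C b) \<longleftrightarrow> Le C b (Neg C a)"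
  using neg_char by blast

lemma negneg: assumes a: "a \<in> hom C X Y" shows "Neg C (Neg C a) = a"
proof (rule le_antisym)
  have na: "Neg C a \<in> hom C X Y" using neg_hom[OF a] .
  have nna: "Neg C (Neg C a) \<in> hom C X Y" using neg_hom[OF na] .
  show "Le C a (Neg C (Neg C a))" using neg_flip[OF a na] le_refl'[OF na] by blast
  have z: "Le C (Meet C (Neg C (Neg C a)) (Neg C a)) (Bot C X Y)"
    using neg_char[OF na nna] le_refl'[OF nna] meet_le1[OF nna na] meet_le2[OF nna na] meet_hom[OF nna na] by blast
  have m2: "Le C (Meet C (Neg C (Neg C a)) (Neg C a)) a" using z bot_least[OF a] le_trans by blast
  have m3: "Le C (Meet C (Neg C (Neg C a)) a) a" using meet_le2[OF nna a] .
  have j: "Le C (Join C (Meet C (Neg C (Neg C a)) a) (Meet C (Neg C (Neg C a)) (Neg C a))) a"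
    using join_lub[OF meet_hom[OF nna a] meet_hom[OF nna na] a] m2 m3 by blast
  have t: "Le C (Neg C (Neg C a)) (Meet C (Neg C (Neg C a)) (Top C X Y))"
    using meet_glb[OF nna top_hom nna] le_refl'[OF nna] top_greatest[OF nna] by blast
  have "Meet C (Neg C (Neg C a)) (Top C X Y) = Join C (Meet C (Neg C (Neg C a)) a) (Meet C (Neg C (Neg C a)) (Neg C a))"
    using neg_join[OF a] distrib[OF nna a na] by simp
  thus "Le C (Neg C (Neg C a)) a" using t j le_trans by metis
qed

lemma neg_bot: "Neg C (Bot C X Y) = Top C X Y"
proof (rule le_antisym)
  show "Le C (Neg C (Bot C X Y)) (Top C X Y)" using top_greatest neg_hom bot_hom by blast
  show "Le C (Top C X Y) (Neg C (Bot C X Y))" using neg_char[OF bot_hom top_hom] by blast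
qed

lemma iso_neg:
  assumes ph: "\<And>f. f \<in> hom C A B \<Longrightarrow> \<phi> f \<in> hom C A' B'"
    and ps: "\<And>g. g \<in> hom C A' B' \<Longrightarrow> \<psi> g \<in> hom C A B"
    and inv1: "\<And>f. f \<in> hom C A B \<Longrightarrow> \<psi> (\<phi> f) = f"
    and inv2: "\<And>g. g \<in> hom C A' B' \<Longrightarrow> \<phi> (\<psi> g) = g"
    and m1: "\<And>f f'. \<lbrakk>f \<in> hom C A B; f' \<in> hom C A B; Le C f f'\<rbrakk> \<Longrightarrow> Le C (\<phi> f) (\<phi> f')"
    and m2: "\<And>g g'. \<lbrakk>g \<in> hom C A' B'; g' \<in> hom C A' B'; Le C g g'\<rbrakk> \<Longrightarrow> Le C (\<psi> g) (\<psi> g')"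
    and f: "f \<in> hom C A B"
  shows "\<phi> (Neg C f) = Neg C (\<phi> f)"
proof (rule le_antisym)
  have nf: "Neg C f \<in> hom C A B" using neg_hom[OF f] .
  have pf: "\<phi> f \<in> hom C A' B'" using ph[OF f] .
  have pnf: "\<phi> (Neg C f) \<in> hom C A' B'" using ph[OF nf] .
  have npf: "Neg C (\<phi> f) \<in> hom C A' B'" using neg_hom[OF pf] .
  show "Le C (\<phi> (Neg C f)) (Neg C (\<phi> f))"
    unfolding neg_char[OF pf pnf]
  proof (intro ballI impI)
    fix k assume k: "k \<in> hom C A' B'" and k1: "Le C k (\<phi> (Neg C f))" and k2: "Le C k (\<phi> f)"
    have "Le C (\<psi> k) (Neg C f)" using m2[OF k pnf k1] inv1[OF nf] by simp
    moreover have "Le C (\<psi> k) f" using m2[OF k pf k2] inv1[OF f] by simp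
    ultimately have "Le C (\<psi> k) (Bot C A B)" using neg_char[OF f nf] ps[OF k] le_refl'[OF nf] by blast
    hence "Le C (\<psi> k) (\<psi> (Bot C A' B'))" using bot_least[OF ps[OF bot_hom]] le_trans by blast
    hence "Le C (\<phi> (\<psi> k)) (\<phi> (\<psi> (Bot C A' B')))" using m1 ps k bot_hom by blast
    thus "Le C k (Bot C A' B')" using inv2 k bot_hom by metis
  qed
  have q: "\<psi> (Neg C (\<phi> f)) \<in> hom C A B" using ps[OF npf] .
  have "Le C (\<psi> (Neg C (\<phi> f))) (Neg C f)"
    unfolding neg_char[OF f q]
  proof (intro ballI impI)
    fix k assume k: "k \<in> hom C A B" and k1: "Le C k (\<psi> (Neg C (\<phi> f)))" and k2: "Le C k f"
    have "Le C (\<phi> k) (Neg C (\<phi> f))" using m1[OF k q k1] inv2[OF npf] by simp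
    moreover have "Le C (\<phi> k) (\<phi> f)" using m1[OF k f k2] .
    ultimately have "Le C (\<phi> k) (Bot C A' B')" using neg_char[OF pf npf] ph[OF k] le_refl'[OF npf] by blast
    hence "Le C (\<phi> k) (\<phi> (Bot C A B))" using bot_least[OF ph[OF bot_hom]] le_trans by blast
    hence "Le C (\<psi> (\<phi> k)) (\<psi> (\<phi> (Bot C A B)))" using m2 ph k bot_hom by blast
    thus "Le C k (Bot C A B)" using inv1 k bot_hom by metis
  qed
  hence "Le C (\<phi> (\<psi> (Neg C (\<phi> f)))) (\<phi> (Neg C f))" using m1 q nf by blast
  thus "Le C (Neg C (\<phi> f)) (\<phi> (Neg C f))" using inv2[OF npf] by simp
qed
end

context cartesian_bicategory begin

declare le_trans[trans]

lemma cml: "\<lbrakk>Le C g g'; Arr C f; Cod C f = Dom C g\<rbrakk> \<Longrightarrow> Le C (Comp C f g) (Comp C f g')"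
  using comp_mono[of f f g g'] le_refl le_parallel by blast
lemma cmr: "\<lbrakk>Le C f f'; Arr C g; Cod C f = Dom C g\<rbrakk> \<Longrightarrow> Le C (Comp C f g) (Comp C f' g)"
  using comp_mono[of f f' g g] le_refl le_parallel by blast

lemma cocopy_le_r: "Le C (Cocopy C Y) (TensA C (Id C Y) (Disc C Y))"
proof -
  have "Cocopy C Y = Comp C (Comp C (Cocopy C Y) (Copy C Y)) (TensA C (Id C Y) (Disc C Y))"
    by (simp add: assoc copy_disc_r)
  also have "Le C \<dots> (Comp C (Id C (TensO C Y Y)) (TensA C (Id C Y) (Disc C Y)))"
    by (rule cmr[OF copy_adj_counit]) auto
  finally show ?thesis by simp
qed

lemma cocopy_le_l: "Le C (Cocopy C Y) (TensA C (Disc C Y) (Id C Y))"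
proof -
  have "Cocopy C Y = Comp C (Comp C (Cocopy C Y) (Copy C Y)) (TensA C (Disc C Y) (Id C Y))"
    by (simp add: assoc copy_unit)
  also have "Le C \<dots> (Comp C (Id C (TensO C Y Y)) (TensA C (Disc C Y) (Id C Y)))"
    by (rule cmr[OF copy_adj_counit]) auto
  finally show ?thesis by simp
qed

lemma hom_iff: "f \<in> hom C X Y \<longleftrightarrow> Arr C f \<and> Dom C f = X \<and> Cod C f = Y" by (simp add: hom_def)

lemma cart_le1: assumes a: "Arr C a" "Dom C a = X" "Cod C a = Y" and b: "Arr C b" "Dom C b = X" "Cod C b = Y"
  shows "Le C (Comp C (Copy C X) (Comp C (TensA C a b) (Cocopy C Y))) a"
proof -
  have "Le C (Comp C (Copy C X) (Comp C (TensA C a b) (Cocopy C Y))) (Comp C (Copy C X) (Comp C (TensA C a b) (TensA C (Id C Y) (Disc C Y))))"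
    using a b by (intro cml cocopy_le_r) auto
  also have "Comp C (TensA C a b) (TensA C (Id C Y) (Disc C Y)) = TensA C a (Comp C b (Disc C Y))"
    using ic[of a "Id C Y" b "Disc C Y"] a b by simp
  also have "Le C (Comp C (Copy C X) (TensA C a (Comp C b (Disc C Y)))) (Comp C (Copy C X) (TensA C a (Disc C X)))"
    using a b lax_disc[of b X Y] by (intro cml tens_mono le_refl) (auto simp: hom_def)
  also have "TensA C a (Disc C X) = Comp C (TensA C (Id C X) (Disc C X)) a"
    using ic[of "Id C X" a "Disc C X" "Id C (Unit C)"] a by simp
  also have "Comp C (Copy C X) (Comp C (TensA C (Id C X) (Disc C X)) a) = a"
    using a by (simp flip: assoc add: copy_disc_r)
  finally show ?thesis .
qed

lemma cart_le2: assumes a: "Arr C a" "Dom C a = X" "Cod C a = Y" and b: "Arr C b" "Dom C b = X" "Cod C b = Y"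
  shows "Le C (Comp C (Copy C X) (Comp C (TensA C a b) (Cocopy C Y))) b"
proof -
  have "Le C (Comp C (Copy C X) (Comp C (TensA C a b) (Cocopy C Y))) (Comp C (Copy C X) (Comp C (TensA C a b) (TensA C (Disc C Y) (Id C Y))))"
    using a b by (intro cml cocopy_le_l) auto
  also have "Comp C (TensA C a b) (TensA C (Disc C Y) (Id C Y)) = TensA C (Comp C a (Disc C Y)) b"
    using ic[of a "Disc C Y" b "Id C Y"] a b by simp
  also have "Le C (Comp C (Copy C X) (TensA C (Comp C a (Disc C Y)) b)) (Comp C (Copy C X) (TensA C (Disc C X) b))"
    using a b lax_disc[of a X Y] by (intro cml tens_mono le_refl) (auto simp: hom_def)
  also have "TensA C (Disc C X) b = Comp C (TensA C (Disc C X) (Id C X)) b"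
    using ic[of "Disc C X" "Id C (Unit C)" "Id C X" b] b by simp
  also have "Comp C (Copy C X) (Comp C (TensA C (Disc C X) (Id C X)) b) = b"
    using b by (simp flip: assoc add: copy_disc_l)
  finally show ?thesis .
qed

lemma cart_ge: assumes h: "Arr C h" "Dom C h = X" "Cod C h = Y" and ha: "Le C h a" and hb: "Le C h b"
  shows "Le C h (Comp C (Copy C X) (Comp C (TensA C a b) (Cocopy C Y)))"
proof -
  have "h = Comp C h (Id C Y)" using h by simp
  also have "Le C \<dots> (Comp C h (Comp C (Copy C Y) (Cocopy C Y)))"
    using h by (intro cml copy_adj_unit) auto
  also have "Comp C h (Comp C (Copy C Y) (Cocopy C Y)) = Comp C (Comp C h (Copy C Y)) (Cocopy C Y)"
    using h by (simp add: assoc)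
  also have "Le C \<dots> (Comp C (Comp C (Copy C X) (TensA C h h)) (Cocopy C Y))"
    using h lax_copy[of h X Y] by (intro cmr) (auto simp: hom_def)
  also have "Le C \<dots> (Comp C (Comp C (Copy C X) (TensA C a b)) (Cocopy C Y))"
    using h ha hb le_parallel[OF ha] le_parallel[OF hb]
    by (intro cmr cml tens_mono) auto
  also have "\<dots> = Comp C (Copy C X) (Comp C (TensA C a b) (Cocopy C Y))"
    using h le_parallel[OF ha] le_parallel[OF hb] by (simp add: assoc)
  finally show ?thesis .
qed

lemma copy_map: "is_map C (Copy C X)"
proof -
  have A: "Comp C (Copy C X) (TensA C (Copy C X) (Copy C X)) =
           Comp C (Copy C X) (TensA C (Id C X) (Comp C (Copy C X) (TensA C (Copy C X) (Id C X))))"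
  proof -
    have "TensA C (Copy C X) (Copy C X) = Comp C (TensA C (Copy C X) (Id C X)) (TensA C (Id C X) (TensA C (Id C X) (Copy C X)))"
      using ic[of "Copy C X" "Id C (TensO C X X)" "Id C X" "Copy C X"] tens_id[of X X] tassoc[of "Id C X" "Id C X" "Copy C X"]
      by simp
    hence "Comp C (Copy C X) (TensA C (Copy C X) (Copy C X)) = Comp C (Comp C (Copy C X) (TensA C (Copy C X) (Id C X))) (TensA C (Id C X) (TensA C (Id C X) (Copy C X)))"
      by (simp add: assoc)
    also have "\<dots> = Comp C (Copy C X) (Comp C (TensA C (Id C X) (Copy C X)) (TensA C (Id C X) (TensA C (Id C X) (Copy C X))))"
      by (simp add: copy_assoc assoc)
    also have "Comp C (TensA C (Id C X) (Copy C X)) (TensA C (Id C X) (TensA C (Id C X) (Copy C X))) = TensA C (Id C X) (Comp C (Copy C X) (TensA C (Copy C X) (Id C X)))"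
      using ic[of "Id C X" "Id C X" "Copy C X" "TensA C (Id C X) (Copy C X)"] copy_assoc[of X] by simp
    finally show ?thesis .
  qed
  have B: "Comp C (Comp C (Copy C X) (TensA C (Copy C X) (Id C X))) (TensA C (Sym C X X) (Id C X)) = Comp C (Copy C X) (TensA C (Copy C X) (Id C X))"
  proof -
    have "Comp C (TensA C (Copy C X) (Id C X)) (TensA C (Sym C X X) (Id C X)) = TensA C (Copy C X) (Id C X)"
      using ic[of "Copy C X" "Sym C X X" "Id C X" "Id C X"] copy_comm[of X] by simp
    thus ?thesis by (simp add: assoc)
  qed
  have "Comp C (Copy C X) (Copy C (TensO C X X)) = Comp C (Copy C X) (TensA C (Copy C X) (Copy C X))"
  proof -
    have "Comp C (Copy C X) (Copy C (TensO C X X)) = Comp C (Comp C (Copy C X) (TensA C (Copy C X) (Copy C X))) (TensA C (Id C X) (TensA C (Sym C X X) (Id C X)))"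
      by (simp add: copy_tens assoc tassoc)
    also have "\<dots> = Comp C (Copy C X) (Comp C (TensA C (Id C X) (Comp C (Copy C X) (TensA C (Copy C X) (Id C X)))) (TensA C (Id C X) (TensA C (Sym C X X) (Id C X))))"
      unfolding A by (simp add: assoc)
    also have "Comp C (TensA C (Id C X) (Comp C (Copy C X) (TensA C (Copy C X) (Id C X)))) (TensA C (Id C X) (TensA C (Sym C X X) (Id C X)))
       = TensA C (Id C X) (Comp C (Copy C X) (TensA C (Copy C X) (Id C X)))"
      using ic[of "Id C X" "Id C X" "Comp C (Copy C X) (TensA C (Copy C X) (Id C X))" "TensA C (Sym C X X) (Id C X)"] B by simp
    finally show ?thesis using A by simp
  qed
  moreover have "Comp C (Copy C X) (Disc C (TensO C X X)) = Disc C X"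
  proof -
    have "TensA C (Disc C X) (Disc C X) = Comp C (TensA C (Disc C X) (Id C X)) (Disc C X)"
      using ic[of "Disc C X" "Id C (Unit C)" "Id C X" "Disc C X"] by simp
    thus ?thesis by (simp add: disc_tens flip: assoc) (simp add: copy_disc_l)
  qed
  ultimately show ?thesis unfolding is_map_def by simp
qed
end

context cartesian_bicategory begin
lemma diag: assumes f: "Arr C f" "Dom C f = X" "Cod C f = X"
  shows "Comp C (Copy C X) (Comp C (TensA C f (Id C X)) (Cocopy C X)) = Comp C (Copy C X) (TensA C (Comp C (Copy C X) (bend f)) (Id C X))"
proof -
  have e1: "TensA C (Comp C (Copy C X) (bend f)) (Id C X) = Comp C (TensA C (Copy C X) (Id C X)) (Comp C (TensA C f (Id C (TensO C X X))) (Comp C (TensA C (Cocopy C X) (Id C X)) (TensA C (Disc C X) (Id C X))))"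
  proof -
    have a: "TensA C (Comp C (Copy C X) (bend f)) (Id C X) = Comp C (TensA C (Copy C X) (Id C X)) (TensA C (bend f) (Id C X))"
      using ic[of "Copy C X" "bend f" "Id C X" "Id C X"] f by simp
    have b: "TensA C (bend f) (Id C X) = Comp C (TensA C (TensA C f (Id C X)) (Id C X)) (TensA C (cup X) (Id C X))"
      using ic[of "TensA C f (Id C X)" "cup X" "Id C X" "Id C X"] f by (simp add: bend_def)
    have c: "TensA C (cup X) (Id C X) = Comp C (TensA C (Cocopy C X) (Id C X)) (TensA C (Disc C X) (Id C X))"
      using ic[of "Cocopy C X" "Disc C X" "Id C X" "Id C X"] by simp
    show ?thesis using a b c f by (simp add: tassoc)
  qed
  have sw: "Comp C (TensA C (Id C X) (Copy C X)) (TensA C f (Id C (TensO C X X))) = Comp C (TensA C f (Id C X)) (TensA C (Id C X) (Copy C X))"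
    using ic[of "Id C X" f "Copy C X" "Id C (TensO C X X)"] ic[of f "Id C X" "Id C X" "Copy C X"] f by simp
  have "Comp C (Copy C X) (TensA C (Comp C (Copy C X) (bend f)) (Id C X))
     = Comp C (Comp C (Copy C X) (TensA C (Copy C X) (Id C X))) (Comp C (TensA C f (Id C (TensO C X X))) (Comp C (TensA C (Cocopy C X) (Id C X)) (TensA C (Disc C X) (Id C X))))"
    unfolding e1 using f by (simp add: assoc)
  also have "\<dots> = Comp C (Copy C X) (Comp C (Comp C (TensA C (Id C X) (Copy C X)) (TensA C f (Id C (TensO C X X)))) (Comp C (TensA C (Cocopy C X) (Id C X)) (TensA C (Disc C X) (Id C X))))"
    unfolding copy_assoc using f by (simp add: assoc)
  also have "\<dots> = Comp C (Copy C X) (Comp C (TensA C f (Id C X)) (Comp C (Comp C (TensA C (Id C X) (Copy C X)) (TensA C (Cocopy C X) (Id C X))) (TensA C (Disc C X) (Id C X))))"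
    unfolding sw using f by (simp add: assoc)
  also have "\<dots> = Comp C (Copy C X) (Comp C (TensA C f (Id C X)) (Cocopy C X))"
    unfolding frobenius2 using f by (simp add: assoc copy_disc_l)
  finally show ?thesis by simp
qed

lemma conv_unbend: assumes d: "Arr C d" "Dom C d = X" "Cod C d = Y"
  shows "conv C d = unbend Y X (Comp C (TensA C (Id C Y) d) (cup Y))"
proof -
  have "TensA C (Comp C (TensA C (Id C Y) d) (cup Y)) (Id C X) = Comp C (TensA C (TensA C (Id C Y) d) (Id C X)) (TensA C (cup Y) (Id C X))"
    using ic[of "TensA C (Id C Y) d" "cup Y" "Id C X" "Id C X"] d by simp
  thus ?thesis unfolding conv_def unbend_def Let_def using d by (simp add: assoc)
qed

lemma conv_ty: assumes d: "Arr C d" "Dom C d = X" "Cod C d = Y"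
  shows "Arr C (conv C d)" "Dom C (conv C d) = Y" "Cod C (conv C d) = X"
  using d by (simp_all add: conv_unbend)

lemma conv_hom: "d \<in> hom C X Y \<Longrightarrow> conv C d \<in> hom C Y X"
  using conv_ty by (auto simp: hom_def)

lemma bend_conv: assumes d: "Arr C d" "Dom C d = X" "Cod C d = Y"
  shows "bend (conv C d) = Comp C (TensA C (Id C Y) d) (cup Y)"
  using d by (simp add: conv_unbend bend_unbend)

lemma bend_comp: assumes c: "Arr C c" "Dom C c = X" "Cod C c = Y" and h: "Arr C h" "Dom C h = Y" "Cod C h = Z"
  shows "bend (Comp C c h) = Comp C (TensA C c (Id C Z)) (bend h)"
proof -
  have "TensA C (Comp C c h) (Id C Z) = Comp C (TensA C c (Id C Z)) (TensA C h (Id C Z))"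
    using ic[of c h "Id C Z" "Id C Z"] c h by simp
  thus ?thesis unfolding bend_def using c h by (simp add: assoc)
qed

lemma bend'_sym: assumes c: "Arr C c" "Dom C c = X" "Cod C c = Y"
  shows "Comp C (TensA C (Id C Y) c) (cup Y) = Comp C (Sym C Y X) (bend c)"
proof -
  have "Comp C (TensA C (Id C Y) c) (Sym C Y Y) = Comp C (Sym C Y X) (TensA C c (Id C Y))"
    using sym_nat[of "Id C Y" c] c by simp
  hence "Comp C (TensA C (Id C Y) c) (Comp C (Sym C Y Y) (cup Y)) = Comp C (Sym C Y X) (Comp C (TensA C c (Id C Y)) (cup Y))"
    using c by (simp flip: assoc)
  moreover have "Comp C (Sym C Y Y) (cup Y) = cup Y" by (simp flip: assoc add: cocopy_comm)
  ultimately show ?thesis unfolding bend_def using c by simp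
qed

lemma conv_conv: assumes c: "Arr C c" "Dom C c = X" "Cod C c = Y"
  shows "conv C (conv C c) = c"
proof -
  have cc: "conv C c = unbend Y X (Comp C (Sym C Y X) (bend c))"
    using c by (simp add: conv_unbend bend'_sym)
  have bc: "bend (conv C c) = Comp C (Sym C Y X) (bend c)"
    using c by (simp add: bend_conv bend'_sym)
  have "conv C (conv C c) = unbend X Y (Comp C (Sym C X Y) (bend (conv C c)))"
    using c conv_ty[OF c] by (simp add: conv_unbend bend'_sym)
  also have "\<dots> = unbend X Y (bend c)"
    unfolding bc using c by (simp flip: assoc add: sym_inverse)
  also have "\<dots> = c" using c by (simp add: unbend_bend)
  finally show ?thesis .
qed
end

context peircean_bicategory begin

lemma meet_cart: assumes a: "a \<in> hom C X Y" and b: "b \<in> hom C X Y"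
  shows "Meet C a b = Comp C (Copy C X) (Comp C (TensA C a b) (Cocopy C Y))"
proof (rule le_antisym)
  have m: "Meet C a b \<in> hom C X Y" using meet_hom[OF a b] .
  show "Le C (Meet C a b) (Comp C (Copy C X) (Comp C (TensA C a b) (Cocopy C Y)))"
    using cart_ge[of "Meet C a b" X Y a b] m meet_le1[OF a b] meet_le2[OF a b] by (auto simp: hom_def)
  have h: "Comp C (Copy C X) (Comp C (TensA C a b) (Cocopy C Y)) \<in> hom C X Y" using a b by (simp add: hom_def)
  show "Le C (Comp C (Copy C X) (Comp C (TensA C a b) (Cocopy C Y))) (Meet C a b)"
    using meet_glb[OF a b h] cart_le1[of a X Y b] cart_le2[of a X Y b] a b by (auto simp: hom_def)
qed

lemma bend_mono: assumes l: "Le C f f'" shows "Le C (bend f) (bend f')"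
proof -
  have p: "Arr C f" "Arr C f'" "Dom C f = Dom C f'" "Cod C f = Cod C f'" using le_parallel[OF l] by auto
  show ?thesis unfolding bend_def p(4)[symmetric] using p l
    by (intro cmr tens_mono le_refl) auto
qed

lemma unbend_mono: "\<lbrakk>Le C g g'; Dom C g = TensO C X Y; Cod C g = Unit C\<rbrakk> \<Longrightarrow> Le C (unbend X Y g) (unbend X Y g')"
  unfolding unbend_def using le_parallel[of g g']
  by (intro cml tens_mono le_refl) auto

lemma conv_mono: assumes "Le C c c'" "Dom C c = X" "Cod C c = Y" shows "Le C (conv C c) (conv C c')"
proof -
  have p: "Arr C c" "Arr C c'" "Dom C c' = X" "Cod C c' = Y" using le_parallel[OF assms(1)] assms by auto
  have "Le C (Comp C (TensA C (Id C Y) c) (cup Y)) (Comp C (TensA C (Id C Y) c') (cup Y))"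
    using p assms by (intro cmr tens_mono le_refl) auto
  hence "Le C (unbend Y X (Comp C (TensA C (Id C Y) c) (cup Y))) (unbend Y X (Comp C (TensA C (Id C Y) c') (cup Y)))"
    using p assms by (intro unbend_mono) auto
  thus ?thesis using p assms by (simp add: conv_unbend)
qed

lemma bend_neg: assumes f: "f \<in> hom C X Y" shows "bend (Neg C f) = Neg C (bend f)"
proof (rule iso_neg[where A=X and B=Y and A'="TensO C X Y" and B'="Unit C" and \<psi>="unbend X Y"])
  show "\<And>f. f \<in> hom C X Y \<Longrightarrow> bend f \<in> hom C (TensO C X Y) (Unit C)" by (auto simp: hom_def)
  show "\<And>g. g \<in> hom C (TensO C X Y) (Unit C) \<Longrightarrow> unbend X Y g \<in> hom C X Y" by (auto simp: hom_def)
  show "\<And>f. f \<in> hom C X Y \<Longrightarrow> unbend X Y (bend f) = f" by (auto simp: hom_def unbend_bend)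
  show "\<And>g. g \<in> hom C (TensO C X Y) (Unit C) \<Longrightarrow> bend (unbend X Y g) = g" by (auto simp: hom_def bend_unbend)
  show "\<And>f f'. \<lbrakk>f \<in> hom C X Y; f' \<in> hom C X Y; Le C f f'\<rbrakk> \<Longrightarrow> Le C (bend f) (bend f')" by (rule bend_mono)
  show "\<And>g g'. \<lbrakk>g \<in> hom C (TensO C X Y) (Unit C); g' \<in> hom C (TensO C X Y) (Unit C); Le C g g'\<rbrakk> \<Longrightarrow> Le C (unbend X Y g) (unbend X Y g')"
    by (rule unbend_mono) (auto simp: hom_def)
qed (rule f)

lemma conv_neg: assumes f: "f \<in> hom C X Y" shows "conv C (Neg C f) = Neg C (conv C f)"
proof (rule iso_neg[where A=X and B=Y and A'=Y and B'=X and \<psi>="conv C"])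
  show "\<And>f. f \<in> hom C X Y \<Longrightarrow> conv C f \<in> hom C Y X" by (rule conv_hom)
  show "\<And>g. g \<in> hom C Y X \<Longrightarrow> conv C g \<in> hom C X Y" by (rule conv_hom)
  show "\<And>f. f \<in> hom C X Y \<Longrightarrow> conv C (conv C f) = f" by (auto simp: hom_def conv_conv)
  show "\<And>g. g \<in> hom C Y X \<Longrightarrow> conv C (conv C g) = g" by (auto simp: hom_def conv_conv)
  show "\<And>f f'. \<lbrakk>f \<in> hom C X Y; f' \<in> hom C X Y; Le C f f'\<rbrakk> \<Longrightarrow> Le C (conv C f) (conv C f')"
    by (rule conv_mono) (auto simp: hom_def)
  show "\<And>g g'. \<lbrakk>g \<in> hom C Y X; g' \<in> hom C Y X; Le C g g'\<rbrakk> \<Longrightarrow> Le C (conv C g) (conv C g')"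
    by (rule conv_mono) (auto simp: hom_def)
qed (rule f)

lemma top_disc: "Top C X (Unit C) = Disc C X"
proof (rule le_antisym)
  show "Le C (Disc C X) (Top C X (Unit C))" using top_greatest[OF disc_hom] .
  have t: "Top C X (Unit C) \<in> hom C X (Unit C)" by (rule top_hom)
  have "Top C X (Unit C) = Comp C (Top C X (Unit C)) (Disc C (Unit C))"
    using t by (simp add: disc_unit_obj hom_def)
  also have "Le C \<dots> (Disc C X)" using lax_disc[OF t] .
  finally show "Le C (Top C X (Unit C)) (Disc C X)" .
qed

lemma bot_disc: "Le C (Comp C (Bot C X Y) (Disc C Y)) (Bot C X (Unit C))"
proof -
  have b1: "Bot C X Y \<in> hom C X Y" "Bot C X (Unit C) \<in> hom C X (Unit C)" by (rule bot_hom)+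
  have "Le C (Bot C X Y) (Comp C (Bot C X (Unit C)) (Codisc C Y))"
    using b1 by (intro bot_least) (simp add: hom_def)
  hence "Le C (Comp C (Bot C X Y) (Disc C Y)) (Comp C (Comp C (Bot C X (Unit C)) (Codisc C Y)) (Disc C Y))"
    using b1 by (intro cmr) (auto simp: hom_def)
  also have "\<dots> = Comp C (Bot C X (Unit C)) (Comp C (Codisc C Y) (Disc C Y))"
    using b1 by (simp add: assoc hom_def)
  also have "Le C \<dots> (Comp C (Bot C X (Unit C)) (Id C (Unit C)))"
    using b1 by (intro cml disc_adj_counit) (auto simp: hom_def)
  also have "\<dots> = Bot C X (Unit C)" using b1 by (simp add: hom_def)
  finally show ?thesis .
qed

lemma L1: assumes c: "c \<in> hom C X Y" shows "Le C (Comp C c (conv C (Neg C c))) (Neg C (Id C X))"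
proof -
  define d where "d = Neg C c"
  have d: "d \<in> hom C X Y" unfolding d_def using neg_hom[OF c] .
  define e where "e = Comp C c (conv C d)"
  have e: "e \<in> hom C X X" unfolding e_def using c conv_hom[OF d] comp_hom by blast
  have c': "Arr C c" "Dom C c = X" "Cod C c = Y" and d': "Arr C d" "Dom C d = X" "Cod C d = Y"
    using c d by (auto simp: hom_def)
  have be: "bend e = Comp C (TensA C c d) (cup Y)"
  proof -
    have "bend e = Comp C (TensA C c (Id C X)) (Comp C (TensA C (Id C Y) d) (cup Y))"
      unfolding e_def using c' d' conv_ty[OF d'] by (simp add: bend_comp bend_conv)
    also have "\<dots> = Comp C (Comp C (TensA C c (Id C X)) (TensA C (Id C Y) d)) (cup Y)"
      using c' d' by (simp add: assoc)
    also have "Comp C (TensA C c (Id C X)) (TensA C (Id C Y) d) = TensA C c d"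
      using ic[of c "Id C Y" "Id C X" d] c' d' by simp
    finally show ?thesis .
  qed
  have "Comp C (Copy C X) (bend e) = Comp C (Meet C c d) (Disc C Y)"
    unfolding be meet_cart[OF c d] using c' d' by (simp add: assoc)
  also have "Meet C c d = Bot C X Y" unfolding d_def using neg_meet[OF c] .
  finally have "Le C (Comp C (Copy C X) (bend e)) (Bot C X (Unit C))" using bot_disc by simp
  hence z: "Comp C (Copy C X) (bend e) = Bot C X (Unit C)"
    using bot_least[of "Comp C (Copy C X) (bend e)" X "Unit C"] e le_antisym by (auto simp: hom_def)
  have ne: "Neg C e \<in> hom C X X" using neg_hom[OF e] .
  have "Comp C (Copy C X) (bend (Neg C e)) = Comp C (Copy C X) (Neg C (bend e))"
    using bend_neg[OF e] by simp
  also have "\<dots> = Neg C (Comp C (Copy C X) (bend e))"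
    by (rule map_neg[OF copy_map copy_hom]) (use e in \<open>auto simp: hom_def\<close>)
  also have "\<dots> = Disc C X" unfolding z neg_bot top_disc ..
  finally have dn: "Comp C (Copy C X) (bend (Neg C e)) = Disc C X" .
  have "Meet C (Neg C e) (Id C X) = Comp C (Copy C X) (Comp C (TensA C (Neg C e) (Id C X)) (Cocopy C X))"
    using meet_cart[OF ne id_hom] .
  also have "\<dots> = Comp C (Copy C X) (TensA C (Comp C (Copy C X) (bend (Neg C e))) (Id C X))"
    using diag[of "Neg C e" X] ne by (simp add: hom_def)
  also have "\<dots> = Id C X" unfolding dn by (rule copy_unit)
  finally have "Le C (Id C X) (Neg C e)" using meet_le1[OF ne id_hom] by simp
  hence "Le C e (Neg C (Id C X))" using neg_flip[OF e id_hom] by simp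
  thus ?thesis unfolding e_def d_def .
qed

lemma L3: assumes c: "c \<in> hom C X Y" shows "Le C (Comp C (conv C (Neg C c)) c) (Neg C (Id C Y))"
proof -
  have c1: "conv C (Neg C c) \<in> hom C Y X" using conv_hom[OF neg_hom[OF c]] .
  have "Neg C (conv C (Neg C c)) = conv C c"
    using conv_neg[OF neg_hom[OF c]] negneg[OF c] by simp
  hence "conv C (Neg C (conv C (Neg C c))) = c" using c conv_conv by (auto simp: hom_def)
  thus ?thesis using L1[OF c1] by simp
qed
end

theorem lemma67:
  fixes C :: "('o, 'a, 'm) pbicat_scheme"
  assumes "peircean_bicategory C"
    and "c \<in> hom C X Y"
  shows "Le C (Comp C c (conv C (Neg C c))) (bid C X)
       \<and> Le C (Id C Y) (bcomp C (conv C (Neg C c)) c)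
       \<and> Le C (Comp C (conv C (Neg C c)) c) (bid C Y)
       \<and> Le C (Id C X) (bcomp C c (conv C (Neg C c)))"
proof -
  interpret peircean_bicategory C by fact
  have c: "c \<in> hom C X Y" by fact
  have nc: "Neg C c \<in> hom C X Y" using neg_hom[OF c] .
  have ncv: "Neg C (conv C (Neg C c)) = conv C c"
    using conv_neg[OF nc] negneg[OF c] by simp
  have r1: "Le C (Comp C c (conv C (Neg C c))) (bid C X)" using L1[OF c] by (simp add: bid_def)
  have r3: "Le C (Comp C (conv C (Neg C c)) c) (bid C Y)" using L3[OF c] by (simp add: bid_def)
  have a4: "Le C (Comp C (Neg C c) (conv C c)) (Neg C (Id C X))" using L1[OF nc] negneg[OF c] by simp
  have h4: "Comp C (Neg C c) (conv C c) \<in> hom C X X" using nc conv_hom[OF c] comp_hom by blast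
  have r4: "Le C (Id C X) (bcomp C c (conv C (Neg C c)))"
    unfolding bcomp_def ncv using a4 neg_flip[OF h4 id_hom] by simp
  have a2: "Le C (Comp C (conv C c) (Neg C c)) (Neg C (Id C Y))" using L3[OF nc] negneg[OF c] by simp
  have h2: "Comp C (conv C c) (Neg C c) \<in> hom C Y Y" using nc conv_hom[OF c] comp_hom by blast
  have r2: "Le C (Id C Y) (bcomp C (conv C (Neg C c)) c)"
    unfolding bcomp_def ncv using a2 neg_flip[OF h2 id_hom] by simp
  show ?thesis using r1 r2 r3 r4 by simp
qed
end
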